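(* Let $G$ be the $3$-uniform tight cycle ($k=3$, $s=2$) with $n$ vertices. Then the maximum degree of $G$ is $\Delta=3$. When $n=4$, $\lambda(\mathcal{L})=4$. When $n\ge 5$, $\lambda(\mathcal{L})\le\Delta+1.5=4.5$.
   Context: A $k$-uniform $s$-cycle with $m$ edges has vertex set $\mathbb{Z}_n$, $n=m(k-s)$ (vertex $n+i$ identified with $i$), and edges $e_j=\{j(k-s)+1,\ldots,j(k-s)+k\}$, $j=0,\ldots,m-1$; it is assumed that $n\ge 2k-s$. For $k=3,s=2$ this means vertex set $\mathbb{Z}_n$, $n\ge 4$, with edges $\{j+1,j+2,j+3\}$ for $j=0,\ldots,n-1$. The degree $d_i$ of a vertex is the number of edges containing it. A Laplacian H-eigenvalue of $G$ is a real $\lambda$ for which there exists $\mathbf{x}\in\mathbb{R}^n\setminus\{0\}$ with $\lambda x_i^{k-1}=d_ix_i^{k-1}-\sum_{e\ni i}\prod_{j\in e\setminus\{i\}}x_j$ for all $i$ (equivalently, an H-eigenvalue of the Laplacian tensor $\mathcal{L}=\mathcal{D}-\mathcal{A}$, with $\mathcal{A}$ the adjacency tensor having entries $1/(k-1)!$ on edges and $\mathcal{D}$ the diagonal degree tensor); $\lambda(\mathcal{L})$ is the largest Laplacian H-eigenvalue. *)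

theory Defs
  imports Complex_Main
begin

text \<open>The 3-uniform tight cycle (k = 3, s = 2) on vertex set Z_n, represented by
  {0..<n}; edge j is {j+1, j+2, j+3} taken mod n, for j = 0, ..., n-1.\<close>

definition tc_edge :: "nat \<Rightarrow> nat \<Rightarrow> nat set" where
  "tc_edge n j = {(j + 1) mod n, (j + 2) mod n, (j + 3) mod n}"

definition tc_edges :: "nat \<Rightarrow> nat set set" where
  "tc_edges n = tc_edge n ` {0..<n}"

definition tc_degree :: "nat \<Rightarrow> nat \<Rightarrow> nat" where
  "tc_degree n i = card {e \<in> tc_edges n. i \<in> e}"

definition tc_max_degree :: "nat \<Rightarrow> nat" where
  "tc_max_degree n = Max (tc_degree n ` {0..<n})"

text \<open>Laplacian H-eigenvalue (k = 3, so x_i^(k-1) = x_i^2).\<close>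
definition tc_lap_H_eig :: "nat \<Rightarrow> real \<Rightarrow> bool" where
  "tc_lap_H_eig n lam \<longleftrightarrow>
     (\<exists>x :: nat \<Rightarrow> real. (\<exists>i<n. x i \<noteq> 0) \<and>
        (\<forall>i<n. lam * x i ^ 2 =
           real (tc_degree n i) * x i ^ 2
           - (\<Sum>e\<in>{e \<in> tc_edges n. i \<in> e}. \<Prod>j\<in>e - {i}. x j)))"

text \<open>Largest Laplacian H-eigenvalue (the set is finite and nonempty, so Sup is its maximum).\<close>
definition tc_lambda_L :: "nat \<Rightarrow> real" where
  "tc_lambda_L n = Sup {lam. tc_lap_H_eig n lam}"

end

theory Submission
  imports Defs
begin


lemma mod2: "(a::nat) < 2*n \<Longrightarrow> a mod n = (if a < n then a else a - n)"
  by (simp add: le_mod_geq)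

lemma m_im1: "i<n \<Longrightarrow> (i+n-1) mod (n::nat) = (if i=0 then n-1 else i-1)"
  by (subst mod2) auto
lemma m_im2: "2\<le>n \<Longrightarrow> i<n \<Longrightarrow> (i+n-2) mod (n::nat) = (if i<2 then i+n-2 else i-2)"
  by (subst mod2) auto
lemma m_ip1: "i<n \<Longrightarrow> (i+1) mod (n::nat) = (if i+1<n then i+1 else 0)"
  by (subst mod2) auto
lemma m_ip2: "2\<le>n \<Longrightarrow> i<n \<Longrightarrow> (i+2) mod (n::nat) = (if i+2<n then i+2 else i+2-n)"
  by (subst mod2) auto

definition P :: "(nat \<Rightarrow> real) \<Rightarrow> nat \<Rightarrow> nat \<Rightarrow> real" where
  "P x n i = x ((i+n-2) mod n) * x ((i+n-1) mod n) + x ((i+n-1) mod n) * x ((i+1) mod n)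
           + x ((i+1) mod n) * x ((i+2) mod n)"

lemma edges_at:
  assumes n: "n \<ge> 4" and i: "i < n"
  shows "{e \<in> tc_edges n. i \<in> e} =
    {{(i+n-2) mod n, (i+n-1) mod n, i}, {(i+n-1) mod n, i, (i+1) mod n}, {i, (i+1) mod n, (i+2) mod n}}"
proof -
  have r: "((a::nat) mod n + k) mod n = (a + k) mod n" for a k by (simp add: mod_add_left_eq)
  have ii: "(i+n) mod n = i" using i by simp
  have i1: "(i+1+n) mod n = (i+1) mod n" "(i+2+n) mod n = (i+2) mod n" by (rule mod_add_self2)+
  have E3: "tc_edge n ((i+n-3) mod n) = {(i+n-2) mod n, (i+n-1) mod n, i}"
  proof -
    have q: "i+n-3+1 = i+n-2" "i+n-3+2 = i+n-1" "i+n-3+3 = i+n" using n by auto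
    show ?thesis unfolding tc_edge_def r q ii ..
  qed
  have E2: "tc_edge n ((i+n-2) mod n) = {(i+n-1) mod n, i, (i+1) mod n}"
  proof -
    have q: "i+n-2+1 = i+n-1" "i+n-2+2 = i+n" "i+n-2+3 = (i+1)+n" using n by auto
    show ?thesis unfolding tc_edge_def r q ii i1 ..
  qed
  have E1: "tc_edge n ((i+n-1) mod n) = {i, (i+1) mod n, (i+2) mod n}"
  proof -
    have q: "i+n-1+1 = i+n" "i+n-1+2 = (i+1)+n" "i+n-1+3 = (i+2)+n" using n by auto
    show ?thesis unfolding tc_edge_def r q ii i1 ..
  qed
  have bk: "((j+k) mod n + n - k) mod n = j" if "j < n" "k \<le> n" for j k
  proof -
    have "(j+k) mod n + n - k = (j+k) mod n + (n-k)" using that by simp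
    hence "((j+k) mod n + n - k) mod n = (j+k+(n-k)) mod n" using r by simp
    also have "j+k+(n-k) = j+n" using that by simp
    finally show ?thesis using that by simp
  qed
  have J: "j \<in> {(i+n-3) mod n, (i+n-2) mod n, (i+n-1) mod n}" if "j < n" "i \<in> tc_edge n j" for j
  proof -
    have "i = (j+1) mod n \<or> i = (j+2) mod n \<or> i = (j+3) mod n" using that(2) unfolding tc_edge_def by auto
    then show ?thesis
    proof (elim disjE)
      assume "i = (j+1) mod n" thus ?thesis using bk[OF that(1), of 1] n by simp
    next
      assume "i = (j+2) mod n" thus ?thesis using bk[OF that(1), of 2] n by simp
    next
      assume "i = (j+3) mod n" thus ?thesis using bk[OF that(1), of 3] n by simp
    qed
  qed
  have mem: "(i+n-3) mod n < n" "(i+n-2) mod n < n" "(i+n-1) mod n < n" using n by auto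
  show ?thesis (is "?L = ?R")
  proof
    show "?L \<subseteq> ?R"
    proof
      fix e assume "e \<in> ?L"
      then obtain j where j: "j < n" "e = tc_edge n j" "i \<in> e" unfolding tc_edges_def by auto
      then have "j \<in> {(i+n-3) mod n, (i+n-2) mod n, (i+n-1) mod n}" using J by simp
      then show "e \<in> ?R" using j E1 E2 E3 by auto
    qed
    show "?R \<subseteq> ?L"
    proof -
      have "tc_edge n ((i+n-3) mod n) \<in> tc_edges n" "tc_edge n ((i+n-2) mod n) \<in> tc_edges n"
           "tc_edge n ((i+n-1) mod n) \<in> tc_edges n" using mem unfolding tc_edges_def by auto
      then show ?thesis unfolding E1 E2 E3 by auto
    qed
  qed
qed

lemma sum_at:
  assumes n: "n \<ge> 4" and i: "i < n"
  shows "(\<Sum>e\<in>{e \<in> tc_edges n. i \<in> e}. \<Prod>j\<in>e - {i}. x j) = P x n i"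
    and "tc_degree n i = 3"
proof -
  have d: "(i+n-2) mod n \<noteq> (i+n-1) mod n" "(i+n-2) mod n \<noteq> i" "(i+n-1) mod n \<noteq> i"
     "(i+1) mod n \<noteq> i" "(i+2) mod n \<noteq> i" "(i+1) mod n \<noteq> (i+2) mod n"
     "(i+n-1) mod n \<noteq> (i+1) mod n" "(i+n-2) mod n \<noteq> (i+1) mod n"
     "(i+n-1) mod n \<noteq> (i+2) mod n"
  proof - have n2: "2 \<le> n" using n by simp show
   "(i+n-2) mod n \<noteq> (i+n-1) mod n" "(i+n-2) mod n \<noteq> i" "(i+n-1) mod n \<noteq> i"
     "(i+1) mod n \<noteq> i" "(i+2) mod n \<noteq> i" "(i+1) mod n \<noteq> (i+2) mod n"
     "(i+n-1) mod n \<noteq> (i+1) mod n" "(i+n-2) mod n \<noteq> (i+1) mod n"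
     "(i+n-1) mod n \<noteq> (i+2) mod n"
  unfolding m_im1[OF i] m_im2[OF n2 i] m_ip1[OF i] m_ip2[OF n2 i] using n i by (auto split: if_splits) qed
  let ?A = "{(i+n-2) mod n, (i+n-1) mod n, i}"
  let ?B = "{(i+n-1) mod n, i, (i+1) mod n}"
  let ?C = "{i, (i+1) mod n, (i+2) mod n}"
  have AB: "?A \<noteq> ?B" proof assume h: "?A = ?B" have "(i+n-2) mod n \<in> ?A" by simp hence "(i+n-2) mod n \<in> ?B" by (simp only: h) thus False using d by simp qed
  have AC: "?A \<noteq> ?C" proof assume h: "?A = ?C" have "(i+n-1) mod n \<in> ?A" by simp hence "(i+n-1) mod n \<in> ?C" by (simp only: h) thus False using d by simp qed
  have BC: "?B \<noteq> ?C" proof assume h: "?B = ?C" have "(i+n-1) mod n \<in> ?B" by simp hence "(i+n-1) mod n \<in> ?C" by (simp only: h) thus False using d by simp qed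
  have pa: "(\<Prod>j\<in>?A - {i}. x j) = x ((i+n-2) mod n) * x ((i+n-1) mod n)"
  proof -
    have "?A - {i} = {(i+n-2) mod n, (i+n-1) mod n}" using d by auto
    thus ?thesis using d by simp
  qed
  have pb: "(\<Prod>j\<in>?B - {i}. x j) = x ((i+n-1) mod n) * x ((i+1) mod n)"
  proof -
    have "?B - {i} = {(i+n-1) mod n, (i+1) mod n}" using d by auto
    thus ?thesis using d by simp
  qed
  have pc: "(\<Prod>j\<in>?C - {i}. x j) = x ((i+1) mod n) * x ((i+2) mod n)"
  proof -
    have "?C - {i} = {(i+1) mod n, (i+2) mod n}" using d by auto
    thus ?thesis using d by simp
  qed
  show "(\<Sum>e\<in>{e \<in> tc_edges n. i \<in> e}. \<Prod>j\<in>e - {i}. x j) = P x n i"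
    unfolding edges_at[OF n i] using AB AC BC pa pb pc by (simp add: P_def)
  show "tc_degree n i = 3"
    unfolding tc_degree_def edges_at[OF n i] using AB AC BC by simp
qed


lemma core:
  fixes a b c d e f \<mu> :: real
  assumes ba: "\<bar>a\<bar> \<le> 1" and bb: "\<bar>b\<bar> \<le> 1" and bc: "\<bar>c\<bar> \<le> 1" and bd: "\<bar>d\<bar> \<le> 1"
    and be: "\<bar>e\<bar> \<le> 1" and bf: "\<bar>f\<bar> \<le> 1"
    and h1: "\<mu> = -(a*b+b*c+c*d)" and h2: "\<mu>*b^2 = -(e*a + a + c)" and h3: "\<mu>*c^2 = -(b + d + d*f)"
  shows "\<mu> \<le> 3/2"
proof (cases "\<mu> \<le> 0")
  case True then show ?thesis by simp
next
  case False
  hence mp: "\<mu> > 0" by simp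
  show ?thesis
  proof (cases "b*c \<ge> 0")
    case True
    have "-(a*b) \<le> \<bar>b\<bar>"
    proof -
      have "-(a*b) \<le> \<bar>a*b\<bar>" by simp
      also have "\<dots> = \<bar>a\<bar>*\<bar>b\<bar>" by (simp add: abs_mult)
      also have "\<dots> \<le> 1*\<bar>b\<bar>" by (rule mult_right_mono[OF ba]) simp
      finally show ?thesis by simp
    qed
    moreover have "-(c*d) \<le> \<bar>c\<bar>"
    proof -
      have "-(c*d) \<le> \<bar>c*d\<bar>" by simp
      also have "\<dots> = \<bar>c\<bar>*\<bar>d\<bar>" by (simp add: abs_mult)
      also have "\<dots> \<le> \<bar>c\<bar>*1" by (rule mult_left_mono[OF bd]) simp
      finally show ?thesis by simp
    qed
    moreover have "b*c = \<bar>b\<bar>*\<bar>c\<bar>" using True by (metis abs_mult abs_of_nonneg)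
    moreover have "(1-\<bar>b\<bar>)*(1-\<bar>c\<bar>) \<ge> 0" using bb bc by simp
    ultimately show ?thesis using h1 by (simp add: algebra_simps)
  next
    case False
    hence "b < 0 \<and> c > 0 \<or> b > 0 \<and> c < 0"
      using False by (auto simp: not_le mult_less_0_iff)
    then show ?thesis
    proof
      assume bc0: "b < 0 \<and> c > 0"
      have "\<mu>*b^2 \<ge> 0" using mp by simp
      hence A: "-a*(1+e) \<ge> c" using h2 by (simp add: algebra_simps)
      have "-a \<ge> c/2"
      proof (cases "-a \<ge> 0")
        case True
        have "-a*(1+e) \<le> -a*2" by (rule mult_left_mono) (use be True in auto)
        then show ?thesis using A by simp
      next
        case False
        have "-a*(1+e) \<le> 0" using False be by (simp add: mult_nonpos_nonneg)
        then show ?thesis using A bc0 by simp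
      qed
      hence "(-a)*b \<le> (c/2)*b" using bc0 by (intro mult_right_mono_neg) auto
      moreover have "-(c*d) \<le> c"
      proof -
        have "c*(-d) \<le> c*1" by (rule mult_left_mono) (use bd bc0 in auto)
        thus ?thesis by simp
      qed
      moreover have "c*(1-b/2) \<le> 3/2"
      proof -
        have "c*(1-b/2) \<le> 1*(1-b/2)" by (rule mult_right_mono) (use bc bb in auto)
        then show ?thesis using bb by simp
      qed
      ultimately show ?thesis using h1 by (simp add: algebra_simps)
    next
      assume bc0: "b > 0 \<and> c < 0"
      have "\<mu>*c^2 \<ge> 0" using mp by simp
      hence A: "-d*(1+f) \<ge> b" using h3 by (simp add: algebra_simps)
      have "-d \<ge> b/2"
      proof (cases "-d \<ge> 0")
        case True
        have "-d*(1+f) \<le> -d*2" by (rule mult_left_mono) (use bf True in auto)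
        then show ?thesis using A by simp
      next
        case False
        have "-d*(1+f) \<le> 0" using False bf by (simp add: mult_nonpos_nonneg)
        then show ?thesis using A bc0 by simp
      qed
      hence "(-d)*c \<le> (b/2)*c" using bc0 by (intro mult_right_mono_neg) auto
      moreover have "-(a*b) \<le> b"
      proof -
        have "(-a)*b \<le> 1*b" by (rule mult_right_mono) (use ba bc0 in auto)
        thus ?thesis by simp
      qed
      moreover have "b*(1-c/2) \<le> 3/2"
      proof -
        have "b*(1-c/2) \<le> 1*(1-c/2)" by (rule mult_right_mono) (use bc bb in auto)
        then show ?thesis using bc by simp
      qed
      ultimately show ?thesis using h1 by (simp add: algebra_simps)
    qed
  qed
qed

lemma scale:
  fixes A B C D E F m lam :: real
  assumes m: "m > 0" and bA: "\<bar>A\<bar> \<le> m" and bB: "\<bar>B\<bar> \<le> m" and bC: "\<bar>C\<bar> \<le> m" and bD: "\<bar>D\<bar> \<le> m"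
    and bE: "\<bar>E\<bar> \<le> m" and bF: "\<bar>F\<bar> \<le> m"
    and e1: "lam * m^2 = 3*m^2 - (A*B + B*C + C*D)"
    and e2: "lam * B^2 = 3*B^2 - (E*A + A*m + m*C)"
    and e3: "lam * C^2 = 3*C^2 - (B*m + m*D + D*F)"
  shows "lam \<le> 9/2"
proof -
  have bd: "\<bar>X/m\<bar> \<le> 1" if "\<bar>X\<bar> \<le> m" for X using that m by (simp add: abs_divide)
  have h1: "lam - 3 = -((A/m)*(B/m) + (B/m)*(C/m) + (C/m)*(D/m))"
    using e1 m by (simp add: field_simps power2_eq_square)
  have h2: "(lam - 3)*(B/m)^2 = -((E/m)*(A/m) + A/m + C/m)"
  proof -
    have "(lam - 3)*(B/m)^2 = ((lam-3)*B^2)/m^2" by (simp add: power_divide)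
    also have "\<dots> = -(E*A + A*m + m*C)/m^2" using e2 by (simp add: algebra_simps)
    also have "\<dots> = -((E/m)*(A/m) + A/m + C/m)" using m by (simp add: field_simps power2_eq_square)
    finally show ?thesis .
  qed
  have h3: "(lam - 3)*(C/m)^2 = -(B/m + D/m + (D/m)*(F/m))"
  proof -
    have "(lam - 3)*(C/m)^2 = ((lam-3)*C^2)/m^2" by (simp add: power_divide)
    also have "\<dots> = -(B*m + m*D + D*F)/m^2" using e3 by (simp add: algebra_simps)
    also have "\<dots> = -(B/m + D/m + (D/m)*(F/m))" using m by (simp add: field_simps power2_eq_square)
    finally show ?thesis .
  qed
  have "lam - 3 \<le> 3/2"
    by (rule core[OF bd[OF bA] bd[OF bB] bd[OF bC] bd[OF bD] bd[OF bE] bd[OF bF] h1 h2 h3])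
  thus ?thesis by simp
qed

lemma eig_iff:
  assumes n: "n \<ge> 4"
  shows "tc_lap_H_eig n lam \<longleftrightarrow>
    (\<exists>x. (\<exists>i<n. x i \<noteq> 0) \<and> (\<forall>i<n. lam * x i^2 = 3 * x i^2 - P x n i))"
  unfolding tc_lap_H_eig_def using sum_at[OF n] by simp

lemma normalize:
  assumes n: "n \<ge> 4" and ev: "tc_lap_H_eig n lam"
  shows "\<exists>y i. i < n \<and> y i > 0 \<and> (\<forall>j<n. \<bar>y j\<bar> \<le> y i) \<and>
           (\<forall>j<n. lam * y j^2 = 3 * y j^2 - P y n j)"
proof -
  obtain x k where k: "k < n" "x k \<noteq> 0" and eq: "\<forall>j<n. lam * x j^2 = 3 * x j^2 - P x n j"
    using ev eig_iff[OF n] by auto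
  let ?S = "(\<lambda>j. \<bar>x j\<bar>) ` {..<n}"
  have fin: "finite ?S" by simp
  have ne: "?S \<noteq> {}" using k by auto
  obtain i where i: "i < n" "\<bar>x i\<bar> = Max ?S" using Max_in[OF fin ne] by auto
  have ge: "\<forall>j<n. \<bar>x j\<bar> \<le> \<bar>x i\<bar>" using Max_ge[OF fin] i by auto
  have xi: "x i \<noteq> 0" using ge k by force
  show ?thesis
  proof (cases "x i > 0")
    case True
    have "\<forall>j<n. \<bar>x j\<bar> \<le> x i" using ge True by auto
    then show ?thesis using i True eq by blast
  next
    case False
    define y where "y = (\<lambda>j. - x j)"
    have Py: "P y n j = P x n j" for j unfolding P_def y_def by simp
    have "y i > 0" using False xi unfolding y_def by simp
    moreover have "\<forall>j<n. \<bar>y j\<bar> \<le> y i" using ge False unfolding y_def by auto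
    moreover have "\<forall>j<n. lam * y j^2 = 3 * y j^2 - P y n j" using eq unfolding Py unfolding y_def by simp
    ultimately show ?thesis using i by blast
  qed
qed

lemma gen1: "((a::nat) mod n + k) mod n = (a + k) mod n" by (simp add: mod_add_left_eq)
lemma gen2: "k \<le> n \<Longrightarrow> ((a::nat) mod n + n - k) mod n = (a + n - k) mod n"
proof -
  assume k: "k \<le> n"
  have "a mod n + n - k = a mod n + (n - k)" using k by simp
  moreover have "a + n - k = a + (n - k)" using k by simp
  ultimately show ?thesis by (simp add: gen1)
qed

lemma idx:
  fixes n i :: nat
  assumes n: "n \<ge> 5" and i: "i < n"
  shows "((i+n-1) mod n + n - 2) mod n = (i+n-3) mod n"
    "((i+n-1) mod n + n - 1) mod n = (i+n-2) mod n"
    "((i+n-1) mod n + 1) mod n = i"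
    "((i+n-1) mod n + 2) mod n = (i+1) mod n"
    "((i+1) mod n + n - 2) mod n = (i+n-1) mod n"
    "((i+1) mod n + n - 1) mod n = i"
    "((i+1) mod n + 1) mod n = (i+2) mod n"
    "((i+1) mod n + 2) mod n = (i+3) mod n"
proof -
  have a1: "i+n-1+n-2 = (i+n-3)+n" "i+n-1+n-1 = (i+n-2)+n" "i+n-1+1 = i+n" "i+n-1+2 = (i+1)+n"
    "i+1+n-2 = i+n-1" "i+1+n-1 = i+n" "i+1+1 = i+2" "i+1+2 = i+3" using n by auto
  have m: "(i+n) mod n = i" using i by simp
  show "((i+n-1) mod n + n - 2) mod n = (i+n-3) mod n"
    using n by (simp only: gen2 a1 mod_add_self2)
  show "((i+n-1) mod n + n - 1) mod n = (i+n-2) mod n"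
    using n by (simp only: gen2 a1 mod_add_self2)
  show "((i+n-1) mod n + 1) mod n = i" by (simp only: gen1 a1 m)
  show "((i+n-1) mod n + 2) mod n = (i+1) mod n" by (simp only: gen1 a1 mod_add_self2)
  show "((i+1) mod n + n - 2) mod n = (i+n-1) mod n" using n by (simp only: gen2 a1)
  show "((i+1) mod n + n - 1) mod n = i" using n by (simp only: gen2 a1 m)
  show "((i+1) mod n + 1) mod n = (i+2) mod n" by (simp only: gen1 a1)
  show "((i+1) mod n + 2) mod n = (i+3) mod n" by (simp only: gen1 a1)
qed

lemma bound5:
  assumes n: "n \<ge> 5" and ev: "tc_lap_H_eig n lam"
  shows "lam \<le> 9/2"
proof -
  have n4: "n \<ge> 4" using n by simp
  obtain y i where i: "i < n" and m: "y i > 0" and ge: "\<forall>j<n. \<bar>y j\<bar> \<le> y i"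
    and eq: "\<forall>j<n. lam * y j^2 = 3 * y j^2 - P y n j"
    using normalize[OF n4 ev] by blast
  have lt: "(i+n-3) mod n < n" "(i+n-2) mod n < n" "(i+n-1) mod n < n" "(i+1) mod n < n"
    "(i+2) mod n < n" "(i+3) mod n < n" using n by auto
  have e1: "lam * (y i)^2 = 3 * (y i)^2 - (y ((i+n-2) mod n) * y ((i+n-1) mod n)
      + y ((i+n-1) mod n) * y ((i+1) mod n) + y ((i+1) mod n) * y ((i+2) mod n))"
    using eq i unfolding P_def by simp
  have e2: "lam * (y ((i+n-1) mod n))^2 = 3 * (y ((i+n-1) mod n))^2 - (y ((i+n-3) mod n) * y ((i+n-2) mod n)
      + y ((i+n-2) mod n) * y i + y i * y ((i+1) mod n))"
  proof -
    have "lam * (y ((i+n-1) mod n))^2 = 3 * (y ((i+n-1) mod n))^2 - P y n ((i+n-1) mod n)"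
      using eq lt(3) by simp
    moreover have "P y n ((i+n-1) mod n) = y ((i+n-3) mod n) * y ((i+n-2) mod n)
      + y ((i+n-2) mod n) * y i + y i * y ((i+1) mod n)" unfolding P_def idx[OF n i] ..
    ultimately show ?thesis by simp
  qed
  have e3: "lam * (y ((i+1) mod n))^2 = 3 * (y ((i+1) mod n))^2 - (y ((i+n-1) mod n) * y i
      + y i * y ((i+2) mod n) + y ((i+2) mod n) * y ((i+3) mod n))"
  proof -
    have "lam * (y ((i+1) mod n))^2 = 3 * (y ((i+1) mod n))^2 - P y n ((i+1) mod n)"
      using eq lt(4) by simp
    moreover have "P y n ((i+1) mod n) = y ((i+n-1) mod n) * y i
      + y i * y ((i+2) mod n) + y ((i+2) mod n) * y ((i+3) mod n)" unfolding P_def idx[OF n i] ..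
    ultimately show ?thesis by simp
  qed
  show ?thesis
    by (rule scale[OF m ge[rule_format, OF lt(2)] ge[rule_format, OF lt(3)] ge[rule_format, OF lt(4)]
         ge[rule_format, OF lt(5)] ge[rule_format, OF lt(1)] ge[rule_format, OF lt(6)] e1 e2 e3])
qed

lemma tri: fixes a b c m :: real
  assumes m: "m > 0" "\<bar>a\<bar> \<le> m" "\<bar>b\<bar> \<le> m" "\<bar>c\<bar> \<le> m"
  shows "a*b + b*c + c*a \<ge> -(m^2)"
proof -
  have "(m+a)*(m+b)*(m+c) \<ge> 0" using m by (simp add: abs_le_iff)
  moreover have "(m-a)*(m-b)*(m-c) \<ge> 0" using m by (simp add: abs_le_iff)
  ultimately have "m * (m^2 + (a*b + b*c + c*a)) \<ge> 0"
    by (simp add: algebra_simps power2_eq_square)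
  then have "m^2 + (a*b + b*c + c*a) \<ge> 0" using m(1) by (simp add: zero_le_mult_iff)
  then show ?thesis by simp
qed

lemma bound4:
  assumes ev: "tc_lap_H_eig 4 lam"
  shows "lam \<le> 4"
proof -
  obtain y i where i: "i < 4" and m: "y i > 0" and ge: "\<forall>j<4. \<bar>y j\<bar> \<le> y i"
    and eq: "\<forall>j<4. lam * y j^2 = 3 * y j^2 - P y 4 j"
    using normalize[OF order_refl ev] by blast
  have e0: "lam * (y i)^2 = 3 * (y i)^2 - P y 4 i" using eq i by simp
  have q: "i+4-2 = i+2" "i+4-1 = i+3" by simp_all
  have Pe: "P y 4 i = y ((i+2) mod 4) * y ((i+3) mod 4)
      + y ((i+3) mod 4) * y ((i+1) mod 4) + y ((i+1) mod 4) * y ((i+2) mod 4)"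
    unfolding P_def q ..
  have e: "lam * (y i)^2 = 3 * (y i)^2 - (y ((i+2) mod 4) * y ((i+3) mod 4)
      + y ((i+3) mod 4) * y ((i+1) mod 4) + y ((i+1) mod 4) * y ((i+2) mod 4))"
    using e0 unfolding Pe .
  have "y ((i+2) mod 4) * y ((i+3) mod 4) + y ((i+3) mod 4) * y ((i+1) mod 4)
      + y ((i+1) mod 4) * y ((i+2) mod 4) \<ge> -((y i)^2)"
  proof -
    have g: "\<bar>y (k mod 4)\<bar> \<le> y i" for k using ge by simp
    show ?thesis by (rule tri[OF m g g g])
  qed
  with e have "lam * (y i)^2 \<le> 4 * (y i)^2" by simp
  then show ?thesis using m by simp
qed

lemma eig4: "tc_lap_H_eig 4 4"
proof -
  let ?x = "\<lambda>j::nat. if j < 2 then (1::real) else -1"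
  have A: "\<forall>i<4. 4 * ?x i^2 = 3 * ?x i^2 - P ?x 4 i"
  proof (intro allI impI)
    fix i :: nat assume "i < 4"
    then have "i = 0 \<or> i = 1 \<or> i = 2 \<or> i = 3" by arith
    then show "4 * ?x i^2 = 3 * ?x i^2 - P ?x 4 i" by (elim disjE) (simp_all add: P_def)
  qed
  have B: "\<exists>i<4. ?x i \<noteq> 0" by (rule exI[of _ 0]) simp
  have n4: "(4::nat) \<ge> 4" by simp
  have "\<exists>x. (\<exists>i<4. x i \<noteq> 0) \<and> (\<forall>i<4. 4 * x i^2 = 3 * x i^2 - P x 4 i)"
    by (rule exI[of _ ?x]) (rule conjI[OF B A])
  then show ?thesis using eig_iff[OF n4, of 4] by simp
qed

lemma eig0: "n \<ge> 4 \<Longrightarrow> tc_lap_H_eig n 0"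
proof -
  assume n: "n \<ge> 4"
  let ?x = "\<lambda>_::nat. (1::real)"
  have A: "\<forall>i<n. 0 * ?x i^2 = 3 * ?x i^2 - P ?x n i" by (simp add: P_def)
  have B: "\<exists>i<n. ?x i \<noteq> 0" using n by (intro exI[of _ 0]) simp
  have "\<exists>x. (\<exists>i<n. x i \<noteq> 0) \<and> (\<forall>i<n. 0 * x i^2 = 3 * x i^2 - P x n i)"
    by (rule exI[of _ ?x]) (rule conjI[OF B A])
  then show ?thesis using eig_iff[OF n, of 0] by simp
qed

theorem proposition8p2:
  fixes n :: nat
  assumes "n \<ge> 4"
  shows "tc_max_degree n = 3 \<and>
         (n = 4 \<longrightarrow> tc_lambda_L n = 4) \<and>
         (n \<ge> 5 \<longrightarrow> tc_lambda_L n \<le> 4.5)"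
proof (intro conjI impI)
  have "tc_degree n ` {0..<n} = (\<lambda>_. 3) ` {0..<n}"
    by (rule image_cong) (auto simp: sum_at(2)[OF assms])
  also have "\<dots> = {3}" using assms by (intro image_constant[of 0]) simp
  finally have "tc_degree n ` {0..<n} = {3}" .
  then show "tc_max_degree n = 3" unfolding tc_max_degree_def by simp
next
  assume n4: "n = 4"
  show "tc_lambda_L n = 4" unfolding tc_lambda_L_def n4
    by (rule cSup_eq_maximum) (use eig4 bound4 in auto)
next
  assume n5: "n \<ge> 5"
  have "Sup {lam. tc_lap_H_eig n lam} \<le> 9/2"
    by (rule cSup_least) (use eig0[OF assms] bound5[OF n5] in auto)
  then show "tc_lambda_L n \<le> 4.5" unfolding tc_lambda_L_def by simp
qed

end
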